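(* Let $c_1,c_2\in\mathbb{R}$ with $|c_1|+|c_2|=1$, $c_1c_2\neq0$ and $|c_1|\neq|c_2|$. Let $c_{2k-1}=c_1$, $c_{2k}=c_2$ for $k\in\mathbb{N}$, and let $J$ be the self-adjoint operator in $l^2(\mathbb{N})$ given by the Jacobi matrix with diagonal entries $q_n=n$ and off-diagonal entries $\lambda_n=c_nn$, i.e. $(Ju)_1=u_1+c_1u_2$, $(Ju)_n=\lambda_{n-1}u_{n-1}+nu_n+\lambda_nu_{n+1}$ for $n\ge2$, on its natural domain $\{u\in l^2(\mathbb{N}):Ju\in l^2(\mathbb{N})\}$. Then $\sigma(J)\cap(-\infty,\frac12)\neq\emptyset$. *)

theory Defs
  imports "HOL-Analysis.Analysis"
begin

text \<open>Sequences in l^2(N). The paper indexes by N = {1,2,...}; we use index k :: nat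
  starting at 0, with k corresponding to the paper's index n = k + 1.\<close>

definition l2 :: "(nat \<Rightarrow> complex) set" where
  "l2 = {u. summable (\<lambda>k. (cmod (u k))\<^sup>2)}"

definition l2_norm :: "(nat \<Rightarrow> complex) \<Rightarrow> real" where
  "l2_norm u = sqrt (\<Sum>k. (cmod (u k))\<^sup>2)"

definition jacobi_apply ::
  "(nat \<Rightarrow> real) \<Rightarrow> (nat \<Rightarrow> real) \<Rightarrow> (nat \<Rightarrow> complex) \<Rightarrow> nat \<Rightarrow> complex" where
  "jacobi_apply q lam u k =
     (if k = 0 then complex_of_real (q 0) * u 0 + complex_of_real (lam 0) * u 1
      else complex_of_real (lam (k - 1)) * u (k - 1) + complex_of_real (q k) * u k
           + complex_of_real (lam k) * u (k + 1))"

definition jacobi_dom :: "(nat \<Rightarrow> real) \<Rightarrow> (nat \<Rightarrow> real) \<Rightarrow> (nat \<Rightarrow> complex) set" where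
  "jacobi_dom q lam = {u \<in> l2. jacobi_apply q lam u \<in> l2}"

definition jacobi_resolvent_set :: "(nat \<Rightarrow> real) \<Rightarrow> (nat \<Rightarrow> real) \<Rightarrow> complex set" where
  "jacobi_resolvent_set q lam =
     {z. (\<forall>f\<in>l2. \<exists>!u. u \<in> jacobi_dom q lam \<and> (\<lambda>k. jacobi_apply q lam u k - z * u k) = f)
       \<and> (\<exists>C. \<forall>u\<in>jacobi_dom q lam.
              l2_norm u \<le> C * l2_norm (\<lambda>k. jacobi_apply q lam u k - z * u k))}"

definition jacobi_spectrum :: "(nat \<Rightarrow> real) \<Rightarrow> (nat \<Rightarrow> real) \<Rightarrow> complex set" where
  "jacobi_spectrum q lam = - jacobi_resolvent_set q lam"

text \<open>Periodic coefficients c_{2k-1} = c1, c_{2k} = c2 (paper indexing from 1);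
  0-based: index k carries c_{k+1}.\<close>
definition per_coeff :: "real \<Rightarrow> real \<Rightarrow> nat \<Rightarrow> real" where
  "per_coeff c1 c2 k = (if even k then c1 else c2)"

end

theory Submission
  imports Defs
begin


definition L2r :: "(nat \<Rightarrow> real) set" where
  "L2r = {r. summable (\<lambda>k. (r k)\<^sup>2)}"

definition lamc :: "real \<Rightarrow> real \<Rightarrow> nat \<Rightarrow> real" where
  "lamc c1 c2 k = per_coeff c1 c2 k * real (k + 1)"

definition jr :: "real \<Rightarrow> real \<Rightarrow> (nat \<Rightarrow> real) \<Rightarrow> nat \<Rightarrow> real" where
  "jr c1 c2 r k = (if k = 0 then r 0 + lamc c1 c2 0 * r 1
     else lamc c1 c2 (k - 1) * r (k - 1) + real (k + 1) * r k + lamc c1 c2 k * r (k + 1))"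

definition Dr :: "real \<Rightarrow> real \<Rightarrow> (nat \<Rightarrow> real) set" where
  "Dr c1 c2 = {r \<in> L2r. jr c1 c2 r \<in> L2r}"

lemma jr_of_real:
  "jacobi_apply (\<lambda>k. real (k + 1)) (\<lambda>k. per_coeff c1 c2 k * real (k + 1))
     (\<lambda>k. complex_of_real (r k)) k = complex_of_real (jr c1 c2 r k)"
  by (simp add: jacobi_apply_def jr_def lamc_def)

lemma jr_Re:
  "Re (jacobi_apply (\<lambda>k. real (k + 1)) (\<lambda>k. per_coeff c1 c2 k * real (k + 1)) v k)
     = jr c1 c2 (\<lambda>k. Re (v k)) k"
  by (simp add: jacobi_apply_def jr_def lamc_def)

lemma l2_of_real: "(\<lambda>k. complex_of_real (r k)) \<in> l2 \<longleftrightarrow> r \<in> L2r"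
  by (simp add: l2_def L2r_def)

lemma l2_norm_of_real: "l2_norm (\<lambda>k. complex_of_real (r k)) = sqrt (\<Sum>k. (r k)\<^sup>2)"
  by (simp add: l2_norm_def)

lemma Re_sq_le: "(Re z)\<^sup>2 \<le> (cmod z)\<^sup>2"
  using abs_Re_le_cmod[of z] by (metis abs_ge_zero power2_abs power_mono)

lemma L2r_Re: assumes "v \<in> l2" shows "(\<lambda>k. Re (v k)) \<in> L2r"
  "(\<Sum>k. (Re (v k))\<^sup>2) \<le> (l2_norm v)\<^sup>2"
proof -
  have s: "summable (\<lambda>k. (cmod (v k))\<^sup>2)" using assms by (simp add: l2_def)
  show "(\<lambda>k. Re (v k)) \<in> L2r" unfolding L2r_def mem_Collect_eq
    by (rule summable_comparison_test[OF _ s]) (auto simp: Re_sq_le)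
  then have s2: "summable (\<lambda>k. (Re (v k))\<^sup>2)" by (simp add: L2r_def)
  have "(\<Sum>k. (Re (v k))\<^sup>2) \<le> (\<Sum>k. (cmod (v k))\<^sup>2)"
    by (rule suminf_le[OF _ s2 s]) (simp add: Re_sq_le)
  also have "\<dots> = (l2_norm v)\<^sup>2" unfolding l2_norm_def
    by (simp add: s suminf_nonneg)
  finally show "(\<Sum>k. (Re (v k))\<^sup>2) \<le> (l2_norm v)\<^sup>2" .
qed

lemma L2r_prod: assumes "r \<in> L2r" "s \<in> L2r" shows "summable (\<lambda>k. r k * s k)"
proof -
  have "summable (\<lambda>k. ((r k)\<^sup>2 + (s k)\<^sup>2) / 2)"
    using assms by (intro summable_divide summable_add) (auto simp: L2r_def)
  then show ?thesis
  proof (rule summable_comparison_test[rotated], intro exI allI impI)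
    fix k show "norm (r k * s k) \<le> ((r k)\<^sup>2 + (s k)\<^sup>2) / 2"
    proof -
      have "0 \<le> (\<bar>r k\<bar> - \<bar>s k\<bar>)\<^sup>2" by simp
      then show ?thesis by (simp add: power2_diff abs_mult)
    qed
  qed
qed

lemma L2r_lin: assumes "r \<in> L2r" "s \<in> L2r" shows "(\<lambda>k. a * r k + b * s k) \<in> L2r"
proof -
  have "summable (\<lambda>k. a\<^sup>2 * (r k)\<^sup>2 + 2 * a * b * (r k * s k) + b\<^sup>2 * (s k)\<^sup>2)"
    using assms L2r_prod[OF assms]
    by (intro summable_add summable_mult) (auto simp: L2r_def)
  then show ?thesis unfolding L2r_def by (simp add: power2_eq_square algebra_simps)
qed

lemma jr_lin: "jr c1 c2 (\<lambda>k. a * r k + b * s k) k = a * jr c1 c2 r k + b * jr c1 c2 s k"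
  by (simp add: jr_def algebra_simps)

lemma Dr_lin: assumes "r \<in> Dr c1 c2" "s \<in> Dr c1 c2" shows "(\<lambda>k. a * r k + b * s k) \<in> Dr c1 c2"
proof -
  have e: "jr c1 c2 (\<lambda>k. a * r k + b * s k) = (\<lambda>k. a * jr c1 c2 r k + b * jr c1 c2 s k)"
    by (rule ext) (rule jr_lin)
  show ?thesis
  using assms L2r_lin[of r s a b] L2r_lin[of "jr c1 c2 r" "jr c1 c2 s" a b]
  by (simp add: Dr_def e)
qed

lemma not_summable_harm1: "\<not> summable (\<lambda>n. 1 / real (Suc n))"
  using not_summable_harmonic[where 'a=real] summable_Suc_iff[where f="\<lambda>n. inverse (real n)"]
  by (simp add: inverse_eq_divide)

lemma harm_lemma:
  assumes "summable h" "\<And>n. 0 \<le> h n" "eps > 0"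
    and "eventually (\<lambda>n. eps \<le> real (Suc n) * h n) sequentially"
  shows False
proof -
  have "summable (\<lambda>n. eps / real (Suc n))"
  proof (rule summable_comparison_test_ev[OF _ assms(1)])
    show "\<forall>\<^sub>F n in sequentially. norm (eps / real (Suc n)) \<le> h n"
      using assms(4) by eventually_elim (use assms(3) in \<open>auto simp: field_simps\<close>)
  qed
  then have "summable (\<lambda>n. (1/eps) * (eps / real (Suc n)))" by (rule summable_mult)
  then show False using not_summable_harm1 assms(3) by simp
qed



lemma pc_abs: assumes "\<bar>c1\<bar> + \<bar>c2\<bar> = 1"
  shows "\<bar>per_coeff c1 c2 k\<bar> + \<bar>per_coeff c1 c2 (Suc k)\<bar> = 1"
    "\<bar>per_coeff c1 c2 k\<bar> \<le> 1"
  using assms by (auto simp: per_coeff_def)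

lemma lamc_abs: assumes "\<bar>c1\<bar> + \<bar>c2\<bar> = 1"
  shows "\<bar>lamc c1 c2 k\<bar> \<le> real (Suc k)"
proof -
  have "\<bar>lamc c1 c2 k\<bar> = \<bar>per_coeff c1 c2 k\<bar> * real (Suc k)"
    by (simp add: lamc_def abs_mult)
  also have "\<dots> \<le> 1 * real (Suc k)"
    using pc_abs(2)[OF assms, of k] by (intro mult_right_mono) auto
  finally show ?thesis by simp
qed

lemma sym_partial:
  "(\<Sum>k<Suc N. jr c1 c2 r k * s k - r k * jr c1 c2 s k)
     = lamc c1 c2 N * (r (Suc N) * s N - s (Suc N) * r N)"
proof (induction N)
  case 0 then show ?case by (simp add: jr_def algebra_simps)
next
  case (Suc N)
  show ?case
    by (subst sum.lessThan_Suc, subst Suc) (simp add: jr_def algebra_simps)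
qed

lemma absprod_le: "\<bar>x * y\<bar> \<le> (x\<^sup>2 + y\<^sup>2) / (2::real)"
proof -
  have "0 \<le> (\<bar>x\<bar> - \<bar>y\<bar>)\<^sup>2" by simp
  then show ?thesis by (simp add: power2_diff abs_mult)
qed

lemma jr_sym:
  assumes c: "\<bar>c1\<bar> + \<bar>c2\<bar> = 1" and r: "r \<in> Dr c1 c2" and s: "s \<in> Dr c1 c2"
  shows "(\<Sum>k. jr c1 c2 r k * s k) = (\<Sum>k. r k * jr c1 c2 s k)"
proof (rule ccontr)
  assume ne: "(\<Sum>k. jr c1 c2 r k * s k) \<noteq> (\<Sum>k. r k * jr c1 c2 s k)"
  define L where "L = (\<Sum>k. jr c1 c2 r k * s k) - (\<Sum>k. r k * jr c1 c2 s k)"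
  have L0: "L \<noteq> 0" using ne by (simp add: L_def)
  have s1: "summable (\<lambda>k. jr c1 c2 r k * s k)" and s2: "summable (\<lambda>k. r k * jr c1 c2 s k)"
    using r s by (auto simp: Dr_def intro: L2r_prod)
  have "summable (\<lambda>k. jr c1 c2 r k * s k - r k * jr c1 c2 s k)"
    using s1 s2 by (rule summable_diff)
  moreover have "(\<Sum>k. jr c1 c2 r k * s k - r k * jr c1 c2 s k) = L"
    unfolding L_def by (rule suminf_diff[OF s1 s2, symmetric])
  ultimately have "(\<lambda>n. \<Sum>k<n. jr c1 c2 r k * s k - r k * jr c1 c2 s k) \<longlonglongrightarrow> L"
    by (metis summable_LIMSEQ)
  then have "(\<lambda>n. \<Sum>k<Suc n. jr c1 c2 r k * s k - r k * jr c1 c2 s k) \<longlonglongrightarrow> L"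
    by (rule LIMSEQ_Suc)
  then have T: "(\<lambda>n. lamc c1 c2 n * (r (Suc n) * s n - s (Suc n) * r n)) \<longlonglongrightarrow> L"
    by (simp only: sym_partial)
  define h where "h n = ((r (Suc n))\<^sup>2 + (s n)\<^sup>2 + (s (Suc n))\<^sup>2 + (r n)\<^sup>2) / 2" for n
  have rr: "summable (\<lambda>k. (r k)\<^sup>2)" "summable (\<lambda>k. (s k)\<^sup>2)" using r s by (auto simp: Dr_def L2r_def)
  have hs: "summable h" unfolding h_def
    using rr summable_Suc_iff[of "\<lambda>k. (r k)\<^sup>2"] summable_Suc_iff[of "\<lambda>k. (s k)\<^sup>2"]
    by (intro summable_divide summable_add) auto
  have h0: "\<And>n. 0 \<le> h n" unfolding h_def by simp
  have "eventually (\<lambda>n. \<bar>L\<bar>/2 < \<bar>lamc c1 c2 n * (r (Suc n) * s n - s (Suc n) * r n)\<bar>) sequentially"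
    using tendsto_rabs[OF T] L0 by (intro order_tendstoD) auto
  then have "eventually (\<lambda>n. \<bar>L\<bar>/2 \<le> real (Suc n) * h n) sequentially"
  proof eventually_elim
    case (elim n)
    have "\<bar>lamc c1 c2 n * (r (Suc n) * s n - s (Suc n) * r n)\<bar>
        = \<bar>lamc c1 c2 n\<bar> * \<bar>r (Suc n) * s n - s (Suc n) * r n\<bar>" by (simp add: abs_mult)
    also have "\<dots> \<le> real (Suc n) * h n"
    proof (rule mult_mono)
      show "\<bar>lamc c1 c2 n\<bar> \<le> real (Suc n)" by (rule lamc_abs[OF c])
      have "\<bar>r (Suc n) * s n - s (Suc n) * r n\<bar> \<le> \<bar>r (Suc n) * s n\<bar> + \<bar>s (Suc n) * r n\<bar>" by simp
      also have "\<dots> \<le> h n" unfolding h_def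
        using absprod_le[of "r (Suc n)" "s n"] absprod_le[of "s (Suc n)" "r n"] by simp
      finally show "\<bar>r (Suc n) * s n - s (Suc n) * r n\<bar> \<le> h n" .
    qed auto
    finally show ?case using elim by simp
  qed
  then show False using harm_lemma[OF hs h0, of "\<bar>L\<bar>/2"] L0 by simp
qed

definition Qf :: "real \<Rightarrow> real \<Rightarrow> (nat \<Rightarrow> real) \<Rightarrow> nat \<Rightarrow> real" where
  "Qf c1 c2 r N = (\<Sum>k\<le>N. real (k + 1) * (r k)\<^sup>2) + 2 * (\<Sum>k<N. lamc c1 c2 k * r k * r (k + 1))"

lemma P_Q: "(\<Sum>k<Suc N. jr c1 c2 r k * r k) = Qf c1 c2 r N + lamc c1 c2 N * r N * r (Suc N)"
proof (induction N)
  case 0 then show ?case by (simp add: jr_def Qf_def power2_eq_square algebra_simps)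
next
  case (Suc N)
  show ?case
    by (subst sum.lessThan_Suc, subst Suc) (simp add: jr_def Qf_def power2_eq_square algebra_simps)
qed

lemma Q_step_ineq:
  fixes c c' x y n :: real
  assumes "\<bar>c\<bar> + \<bar>c'\<bar> = 1" "n \<ge> 0"
  shows "\<bar>c\<bar> * (n + 1) * x\<^sup>2 + 2 * (c * (n + 1)) * x * y + (n + 2) * y\<^sup>2 \<ge> \<bar>c'\<bar> * (n + 2) * y\<^sup>2"
proof -
  have e: "\<bar>c\<bar> * (n + 1) * x\<^sup>2 + 2 * (c * (n + 1)) * x * y + (n + 2) * y\<^sup>2 - \<bar>c'\<bar> * (n + 2) * y\<^sup>2
      = (n + 1) * (\<bar>c\<bar> * (x + sgn c * y)\<^sup>2) + \<bar>c\<bar> * y\<^sup>2"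
  proof -
    have cc: "\<bar>c'\<bar> = 1 - \<bar>c\<bar>" using assms by simp
    show ?thesis unfolding cc
      by (cases "c > 0"; cases "c = 0") (auto simp: power2_eq_square algebra_simps)
  qed
  have "0 \<le> (n + 1) * (\<bar>c\<bar> * (x + sgn c * y)\<^sup>2) + \<bar>c\<bar> * y\<^sup>2"
    using assms(2) by simp
  then show ?thesis using e by linarith
qed

lemma Q_ge: assumes c: "\<bar>c1\<bar> + \<bar>c2\<bar> = 1"
  shows "Qf c1 c2 r N \<ge> \<bar>per_coeff c1 c2 N\<bar> * real (N + 1) * (r N)\<^sup>2"
proof (induction N)
  case 0 then show ?case using mult_right_mono[OF pc_abs(2)[OF c, of 0] zero_le_power2[of "r 0"]]
    by (simp add: Qf_def)
next
  case (Suc N)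
  have eq: "Qf c1 c2 r (Suc N) = Qf c1 c2 r N + 2 * (per_coeff c1 c2 N * (real N + 1)) * r N * r (Suc N)
      + (real N + 2) * (r (Suc N))\<^sup>2"
    by (simp add: Qf_def lamc_def algebra_simps)
  have "\<bar>per_coeff c1 c2 N\<bar> * (real N + 1) * (r N)\<^sup>2 + 2 * (per_coeff c1 c2 N * (real N + 1)) * r N * r (Suc N)
      + (real N + 2) * (r (Suc N))\<^sup>2 \<ge> \<bar>per_coeff c1 c2 (Suc N)\<bar> * (real N + 2) * (r (Suc N))\<^sup>2"
    by (rule Q_step_ineq[OF pc_abs(1)[OF c]]) simp
  then show ?case using Suc eq by (simp add: add.commute)
qed

lemma jr_pos:
  assumes c: "\<bar>c1\<bar> + \<bar>c2\<bar> = 1" and r: "r \<in> Dr c1 c2"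
  shows "0 \<le> (\<Sum>k. jr c1 c2 r k * r k)"
proof (rule ccontr)
  define L where "L = (\<Sum>k. jr c1 c2 r k * r k)"
  assume "\<not> 0 \<le> (\<Sum>k. jr c1 c2 r k * r k)"
  then have L0: "L < 0" by (simp add: L_def)
  have s1: "summable (\<lambda>k. jr c1 c2 r k * r k)"
    using r by (auto simp: Dr_def intro: L2r_prod)
  have "(\<lambda>n. \<Sum>k<n. jr c1 c2 r k * r k) \<longlonglongrightarrow> L"
    unfolding L_def by (rule summable_LIMSEQ[OF s1])
  then have T: "(\<lambda>n. \<Sum>k<Suc n. jr c1 c2 r k * r k) \<longlonglongrightarrow> L" by (rule LIMSEQ_Suc)
  define h where "h n = ((r n)\<^sup>2 + (r (Suc n))\<^sup>2) / 2" for n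
  have rr: "summable (\<lambda>k. (r k)\<^sup>2)" using r by (auto simp: Dr_def L2r_def)
  have hs: "summable h" unfolding h_def
    using rr summable_Suc_iff[of "\<lambda>k. (r k)\<^sup>2"]
    by (intro summable_divide summable_add) auto
  have h0: "\<And>n. 0 \<le> h n" unfolding h_def by simp
  have "eventually (\<lambda>n. (\<Sum>k<Suc n. jr c1 c2 r k * r k) < L/2) sequentially"
    using T L0 by (intro order_tendstoD) auto
  then have "eventually (\<lambda>n. -L/2 \<le> real (Suc n) * h n) sequentially"
  proof eventually_elim
    case (elim n)
    have q: "0 \<le> Qf c1 c2 r n"
      using Q_ge[OF c, where r=r and N=n] by (smt (verit) abs_ge_zero mult_nonneg_nonneg of_nat_0_le_iff zero_le_power2)
    have "\<bar>lamc c1 c2 n * r n * r (Suc n)\<bar> \<le> real (Suc n) * h n"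
    proof -
      have "\<bar>lamc c1 c2 n * r n * r (Suc n)\<bar> = \<bar>lamc c1 c2 n\<bar> * \<bar>r n * r (Suc n)\<bar>"
        by (simp add: abs_mult)
      also have "\<dots> \<le> real (Suc n) * h n"
        using lamc_abs[OF c, of n] absprod_le[of "r n" "r (Suc n)"]
        by (intro mult_mono) (auto simp: h_def)
      finally show ?thesis .
    qed
    then show ?case using elim q P_Q[of c1 c2 r n] by linarith
  qed
  then show False using harm_lemma[OF hs h0, of "-L/2"] L0 by simp
qed



abbreviation "Qs \<equiv> (\<lambda>k. real (k + 1))"
abbreviation "Ls c1 c2 \<equiv> (\<lambda>k. per_coeff c1 c2 k * real (k + 1))"

lemma coercive:
  assumes c: "\<bar>c1\<bar> + \<bar>c2\<bar> = 1"
    and res: "complex_of_real x \<in> jacobi_resolvent_set Qs (Ls c1 c2)"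
    and pos: "\<forall>w\<in>Dr c1 c2. x * (\<Sum>k. (w k)\<^sup>2) \<le> (\<Sum>k. jr c1 c2 w k * w k)"
  shows "\<exists>C>0. \<forall>r\<in>Dr c1 c2. (\<Sum>k. (r k)\<^sup>2) \<le> C * ((\<Sum>k. jr c1 c2 r k * r k) - x * (\<Sum>k. (r k)\<^sup>2))"
proof -
  obtain C0 where C0: "\<forall>u\<in>jacobi_dom Qs (Ls c1 c2).
      l2_norm u \<le> C0 * l2_norm (\<lambda>k. jacobi_apply Qs (Ls c1 c2) u k - complex_of_real x * u k)"
    using res unfolding jacobi_resolvent_set_def by blast
  have ex: "\<forall>f\<in>l2. \<exists>u. u \<in> jacobi_dom Qs (Ls c1 c2) \<and>
      (\<lambda>k. jacobi_apply Qs (Ls c1 c2) u k - complex_of_real x * u k) = f"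
    using res unfolding jacobi_resolvent_set_def by blast
  define C where "C = max C0 1"
  have Cpos: "C > 0" by (simp add: C_def)
  have "\<forall>r\<in>Dr c1 c2. (\<Sum>k. (r k)\<^sup>2) \<le> C * ((\<Sum>k. jr c1 c2 r k * r k) - x * (\<Sum>k. (r k)\<^sup>2))"
  proof
    fix r assume r: "r \<in> Dr c1 c2"
    have rL: "r \<in> L2r" and jrL: "jr c1 c2 r \<in> L2r" using r by (auto simp: Dr_def)
    define R where "R = (\<Sum>k. (r k)\<^sup>2)"
    define F where "F = (\<Sum>k. jr c1 c2 r k * r k)"
    have fl2: "(\<lambda>k. complex_of_real (r k)) \<in> l2" using rL by (simp add: l2_of_real)
    obtain v where v: "v \<in> jacobi_dom Qs (Ls c1 c2)"
      and veq: "(\<lambda>k. jacobi_apply Qs (Ls c1 c2) v k - complex_of_real x * v k) = (\<lambda>k. complex_of_real (r k))"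
      using ex fl2 by blast
    define v' where "v' = (\<lambda>k. Re (v k))"
    have vl2: "v \<in> l2" and jvl2: "jacobi_apply Qs (Ls c1 c2) v \<in> l2"
      using v by (auto simp: jacobi_dom_def)
    have v'L: "v' \<in> L2r" unfolding v'_def by (rule L2r_Re(1)[OF vl2])
    have jrv': "jr c1 c2 v' = (\<lambda>k. Re (jacobi_apply Qs (Ls c1 c2) v k))"
      unfolding v'_def by (rule ext) (rule jr_Re[symmetric])
    have v'D: "v' \<in> Dr c1 c2"
      using v'L L2r_Re(1)[OF jvl2] by (simp add: Dr_def jrv')
    have jv'k: "jr c1 c2 v' k = r k + x * v' k" for k
    proof -
      have e1: "jr c1 c2 v' k = Re (jacobi_apply Qs (Ls c1 c2) v k)" by (rule fun_cong[OF jrv'])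
      have e2: "Re (jacobi_apply Qs (Ls c1 c2) v k) - x * v' k = r k"
        using arg_cong[OF fun_cong[OF veq, of k], of Re] by (simp add: v'_def)
      from e1 e2 show ?thesis by linarith
    qed
    define V where "V = (\<Sum>k. (v' k)\<^sup>2)"
    have R0: "R \<ge> 0" unfolding R_def by (intro suminf_nonneg) (use rL in \<open>auto simp: L2r_def\<close>)
    have nb0: "l2_norm v \<le> C0 * l2_norm (\<lambda>k. jacobi_apply Qs (Ls c1 c2) v k - complex_of_real x * v k)"
      using C0 v by blast
    have nb: "l2_norm v \<le> C0 * sqrt R"
      using nb0 unfolding veq l2_norm_of_real R_def .
    have "l2_norm v \<le> C * sqrt R"
    proof -
      have "C0 * sqrt R \<le> C * sqrt R" using R0 by (intro mult_right_mono) (auto simp: C_def)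
      then show ?thesis using nb by linarith
    qed
    moreover have "0 \<le> l2_norm v" using vl2 by (simp add: l2_norm_def l2_def suminf_nonneg)
    ultimately have "(l2_norm v)\<^sup>2 \<le> (C * sqrt R)\<^sup>2" by (rule power_mono)
    moreover note R0
    ultimately have "(l2_norm v)\<^sup>2 \<le> C\<^sup>2 * R" by (simp add: power_mult_distrib)
    then have VR: "V \<le> C\<^sup>2 * R" using L2r_Re(2)[OF vl2] by (simp add: V_def v'_def)
    define S where "S = (\<Sum>k. r k * v' k)"
    define G where "G = (\<Sum>k. jr c1 c2 r k * v' k)"
    have sR: "(\<lambda>k. (r k)\<^sup>2) sums R" using rL by (simp add: R_def L2r_def summable_sums)
    have sV: "(\<lambda>k. (v' k)\<^sup>2) sums V" using v'L by (simp add: V_def L2r_def summable_sums)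
    have sF: "(\<lambda>k. jr c1 c2 r k * r k) sums F" using L2r_prod[OF jrL rL] by (simp add: F_def summable_sums)
    have sS: "(\<lambda>k. r k * v' k) sums S" using L2r_prod[OF rL v'L] by (simp add: S_def summable_sums)
    have sG: "(\<lambda>k. jr c1 c2 r k * v' k) sums G" using L2r_prod[OF jrL v'L] by (simp add: G_def summable_sums)
    have GS: "G = R + x * S"
    proof -
      have "G = (\<Sum>k. r k * jr c1 c2 v' k)" unfolding G_def by (rule jr_sym[OF c r v'D])
      also have "\<dots> = (\<Sum>k. (r k)\<^sup>2 + x * (r k * v' k))"
        by (simp add: jv'k power2_eq_square algebra_simps)
      also have "\<dots> = R + x * S"
        using sums_add[OF sR sums_mult[OF sS, of x]] by (rule sums_unique[symmetric])
      finally show ?thesis .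
    qed
    have SR: "S \<le> C * R"
    proof -
      have "(\<lambda>k. (C * (r k)\<^sup>2 + (v' k)\<^sup>2 / C) / 2) sums ((C * R + V / C) / 2)"
        by (intro sums_divide sums_add sums_mult sR sV)
      moreover have "r k * v' k \<le> (C * (r k)\<^sup>2 + (v' k)\<^sup>2 / C) / 2" for k
      proof -
        have "0 \<le> (C * r k - v' k)\<^sup>2 / C" using Cpos by simp
        then show ?thesis using Cpos by (simp add: power2_diff field_simps power2_eq_square)
      qed
      ultimately have "S \<le> (C * R + V / C) / 2" by (intro sums_le[OF _ sS]) auto
      also have "V / C \<le> C * R" using VR Cpos by (simp add: field_simps power2_eq_square)
      then have "(C * R + V / C) / 2 \<le> C * R" by simp
      finally show ?thesis .
    qed
    define t where "t = 1 / C"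
    define w where "w = (\<lambda>k. 1 * r k + (- t) * v' k)"
    have wD: "w \<in> Dr c1 c2" unfolding w_def by (rule Dr_lin[OF r v'D])
    have jw: "jr c1 c2 w k = jr c1 c2 r k - t * (r k + x * v' k)" for k
      unfolding w_def jr_lin jv'k[symmetric] by simp
    have sw2: "(\<lambda>k. (w k)\<^sup>2) sums (R - 2 * t * S + t\<^sup>2 * V)"
    proof -
      have "(\<lambda>k. (r k)\<^sup>2 - 2 * t * (r k * v' k) + t\<^sup>2 * (v' k)\<^sup>2) sums (R - 2 * t * S + t\<^sup>2 * V)"
        by (intro sums_add sums_diff sums_mult sR sS sV)
      moreover have "(\<lambda>k. (r k)\<^sup>2 - 2 * t * (r k * v' k) + t\<^sup>2 * (v' k)\<^sup>2) = (\<lambda>k. (w k)\<^sup>2)"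
        by (rule ext) (simp add: w_def power2_eq_square algebra_simps)
      ultimately show ?thesis by simp
    qed
    have sjw: "(\<lambda>k. jr c1 c2 w k * w k) sums (F - t * G - t * R - t * x * S + t\<^sup>2 * S + t\<^sup>2 * x * V)"
    proof -
      have "(\<lambda>k. jr c1 c2 r k * r k - t * (jr c1 c2 r k * v' k) - t * (r k)\<^sup>2 - t * x * (r k * v' k)
          + t\<^sup>2 * (r k * v' k) + t\<^sup>2 * x * (v' k)\<^sup>2)
          sums (F - t * G - t * R - t * x * S + t\<^sup>2 * S + t\<^sup>2 * x * V)"
        by (intro sums_add sums_diff sums_mult sR sS sV sF sG)
      moreover have "(\<lambda>k. jr c1 c2 r k * r k - t * (jr c1 c2 r k * v' k) - t * (r k)\<^sup>2 - t * x * (r k * v' k)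
          + t\<^sup>2 * (r k * v' k) + t\<^sup>2 * x * (v' k)\<^sup>2) = (\<lambda>k. jr c1 c2 w k * w k)"
        by (rule ext, simp only: jw, simp add: w_def power2_eq_square algebra_simps)
      ultimately show ?thesis by simp
    qed
    have "x * (R - 2 * t * S + t\<^sup>2 * V) \<le> F - t * G - t * R - t * x * S + t\<^sup>2 * S + t\<^sup>2 * x * V"
      using pos wD sums_unique[OF sw2] sums_unique[OF sjw] by auto
    then have main: "0 \<le> F - x * R - 2 * t * R + t\<^sup>2 * S"
      by (simp add: GS algebra_simps power2_eq_square)
    have "t\<^sup>2 * S \<le> t\<^sup>2 * (C * R)" using SR by (simp add: mult_left_mono)
    also have "t\<^sup>2 * (C * R) = t * R" using Cpos by (simp add: t_def power2_eq_square)
    finally have "0 \<le> F - x * R - t * R" using main by linarith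
    then have "R / C \<le> F - x * R" by (simp add: t_def)
    then show "R \<le> C * (F - x * R)" using Cpos by (simp add: field_simps)
  qed
  then show ?thesis using Cpos by blast
qed

lemma main_from_test:
  assumes c: "\<bar>c1\<bar> + \<bar>c2\<bar> = 1"
    and test: "\<exists>r0\<in>Dr c1 c2. (\<Sum>k. jr c1 c2 r0 k * r0 k) < (1/2) * (\<Sum>k. (r0 k)\<^sup>2)"
  shows "\<exists>x::real. x < 1/2 \<and> complex_of_real x \<in> jacobi_spectrum Qs (Ls c1 c2)"
proof (rule ccontr)
  assume "\<not> ?thesis"
  then have res: "\<And>x. x < 1/2 \<Longrightarrow> complex_of_real x \<in> jacobi_resolvent_set Qs (Ls c1 c2)"
    by (auto simp: jacobi_spectrum_def)
  obtain r0 where r0: "r0 \<in> Dr c1 c2" and lt: "(\<Sum>k. jr c1 c2 r0 k * r0 k) < (1/2) * (\<Sum>k. (r0 k)\<^sup>2)"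
    using test by blast
  define F0 where "F0 = (\<Sum>k. jr c1 c2 r0 k * r0 k)"
  define R0 where "R0 = (\<Sum>k. (r0 k)\<^sup>2)"
  have F0: "0 \<le> F0" unfolding F0_def by (rule jr_pos[OF c r0])
  have R0: "0 < R0" using F0 lt by (simp add: F0_def R0_def)
  define x1 where "x1 = (F0 / R0 + 1/2) / 2"
  have x1h: "x1 < 1/2" using lt R0 by (simp add: x1_def F0_def R0_def field_simps)
  have x1F: "F0 < x1 * R0" using lt R0 by (simp add: x1_def F0_def R0_def field_simps)
  have x1p: "0 \<le> x1" using F0 R0 by (simp add: x1_def)
  define S where "S = {y. y \<le> x1 \<and> (\<forall>w\<in>Dr c1 c2. y * (\<Sum>k. (w k)\<^sup>2) \<le> (\<Sum>k. jr c1 c2 w k * w k))}"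
  have 0: "0 \<in> S" using x1p jr_pos[OF c] by (auto simp: S_def)
  have bdd: "bdd_above S" by (auto simp: S_def bdd_above_def)
  define xs where "xs = Sup S"
  have Rnn: "0 \<le> (\<Sum>k. (w k)\<^sup>2)" if "w \<in> Dr c1 c2" for w
    using that by (intro suminf_nonneg) (auto simp: Dr_def L2r_def)
  have xsS: "xs \<in> S"
  proof -
    have "xs \<le> x1" unfolding xs_def using 0 by (intro cSup_least) (auto simp: S_def)
    moreover have "xs * (\<Sum>k. (w k)\<^sup>2) \<le> (\<Sum>k. jr c1 c2 w k * w k)" if w: "w \<in> Dr c1 c2" for w
    proof (cases "(\<Sum>k. (w k)\<^sup>2) = 0")
      case True then show ?thesis using jr_pos[OF c w] by simp
    next
      case False
      then have pw: "0 < (\<Sum>k. (w k)\<^sup>2)" using Rnn[OF w] by simp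
      have "xs \<le> (\<Sum>k. jr c1 c2 w k * w k) / (\<Sum>k. (w k)\<^sup>2)"
        unfolding xs_def using 0
      proof (intro cSup_least)
        fix y assume "y \<in> S"
        then have "y * (\<Sum>k. (w k)\<^sup>2) \<le> (\<Sum>k. jr c1 c2 w k * w k)" using w by (auto simp: S_def)
        then show "y \<le> (\<Sum>k. jr c1 c2 w k * w k) / (\<Sum>k. (w k)\<^sup>2)" using pw by (simp add: field_simps)
      qed auto
      then show ?thesis using pw by (simp add: field_simps)
    qed
    ultimately show ?thesis by (auto simp: S_def)
  qed
  have "x1 \<notin> S" using r0 x1F by (auto simp: S_def F0_def R0_def not_le intro!: bexI[of _ r0])
  then have xsl: "xs < x1" using xsS by (auto simp: S_def order.order_iff_strict)
  then have "xs < 1/2" using x1h by simp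
  from coercive[OF c res[OF this]] xsS obtain C where C: "C > 0"
    and Cb: "\<forall>r\<in>Dr c1 c2. (\<Sum>k. (r k)\<^sup>2) \<le> C * ((\<Sum>k. jr c1 c2 r k * r k) - xs * (\<Sum>k. (r k)\<^sup>2))"
    by (auto simp: S_def)
  define y where "y = min x1 (xs + 1/C)"
  have "y \<in> S"
  proof -
    have "y * (\<Sum>k. (w k)\<^sup>2) \<le> (\<Sum>k. jr c1 c2 w k * w k)" if w: "w \<in> Dr c1 c2" for w
    proof -
      have "y * (\<Sum>k. (w k)\<^sup>2) \<le> (xs + 1/C) * (\<Sum>k. (w k)\<^sup>2)"
        using Rnn[OF w] by (intro mult_right_mono) (auto simp: y_def)
      also have "\<dots> = xs * (\<Sum>k. (w k)\<^sup>2) + (\<Sum>k. (w k)\<^sup>2) / C" by (simp add: algebra_simps)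
      also have "\<dots> \<le> (\<Sum>k. jr c1 c2 w k * w k)"
        using Cb w C by (simp add: field_simps)
      finally show ?thesis .
    qed
    then show ?thesis by (auto simp: S_def y_def)
  qed
  then have "y \<le> xs" unfolding xs_def by (rule cSup_upper[OF _ bdd])
  moreover have "xs < y" using xsl C by (simp add: y_def)
  ultimately show False by simp
qed



lemma E_bound:
  fixes a b e p p' x s kap t qv :: real
  assumes ab: "a + b = 1" "0 \<le> a" "0 \<le> b" and e: "e = (b - a) / 2"
    and s: "s * e = \<bar>e\<bar>" "s\<^sup>2 \<le> 1" and kap: "kap = \<bar>e\<bar> / 7" and x: "x \<ge> 1"
    and t: "t = s * kap * p / x" and qv: "qv = p + t"
  shows "e * p\<^sup>2 - e * qv\<^sup>2 + a * (2 * x - 1) * (qv - p)\<^sup>2 + 2 * b * x * (p' - qv)\<^sup>2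
     \<le> - (e\<^sup>2 / 7) * p\<^sup>2 / x + 4 * x * (p' - p)\<^sup>2"
proof -
  define D where "D = p' - p"
  have eq: "e * p\<^sup>2 - e * qv\<^sup>2 + a * (2 * x - 1) * (qv - p)\<^sup>2 + 2 * b * x * (p' - qv)\<^sup>2
     = - 2 * (e * t) * p - e * t\<^sup>2 + a * (2 * x - 1) * t\<^sup>2 + 2 * b * x * (D - t)\<^sup>2"
    by (simp add: qv D_def power2_eq_square algebra_simps)
  have et: "e * t = \<bar>e\<bar> * kap * p / x"
    using s(1) by (simp add: t field_simps)
  have ehalf: "\<bar>e\<bar> \<le> 1/2" using ab e by (simp add: abs_le_iff) 
  have t2: "0 \<le> t\<^sup>2" by simp
  have i1: "- e * t\<^sup>2 \<le> 1/2 * t\<^sup>2"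
  proof -
    have "- e * t\<^sup>2 \<le> \<bar>e\<bar> * t\<^sup>2" using mult_right_mono[of "-e" "\<bar>e\<bar>" "t\<^sup>2"] t2 by simp
    also have "\<dots> \<le> 1/2 * t\<^sup>2" using ehalf t2 by (rule mult_right_mono)
    finally show ?thesis .
  qed
  have i2: "a * (2 * x - 1) * t\<^sup>2 \<le> 2 * x * t\<^sup>2"
  proof -
    have "a * (2 * x - 1) \<le> 1 * (2 * x)" using ab x by (intro mult_mono) auto
    then show ?thesis using t2 by (simp add: mult_right_mono)
  qed
  have i3: "2 * b * x * (D - t)\<^sup>2 \<le> 4 * x * D\<^sup>2 + 4 * x * t\<^sup>2"
  proof -
    have "(D - t)\<^sup>2 \<le> 2 * D\<^sup>2 + 2 * t\<^sup>2"
    proof -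
      have "0 \<le> (D + t)\<^sup>2" by simp
      then show ?thesis by (simp add: power2_eq_square algebra_simps)
    qed
    moreover have "2 * b * x \<le> 2 * x" using ab x by simp
    moreover have "0 \<le> 2 * b * x" using ab x by simp
    ultimately have "2 * b * x * (D - t)\<^sup>2 \<le> 2 * x * (2 * D\<^sup>2 + 2 * t\<^sup>2)"
      using x by (intro mult_mono) (auto simp: ab)
    then show ?thesis by (simp add: algebra_simps)
  qed
  have i4: "(1/2 + 6 * x) * t\<^sup>2 \<le> 7 * kap\<^sup>2 * p\<^sup>2 / x"
  proof -
    have "(1/2 + 6 * x) * t\<^sup>2 \<le> (7 * x) * t\<^sup>2" using x t2 by (intro mult_right_mono) auto
    also have "(7 * x) * t\<^sup>2 = 7 * s\<^sup>2 * kap\<^sup>2 * p\<^sup>2 / x"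
      using x by (simp add: t power2_eq_square field_simps)
    also have "\<dots> \<le> 7 * 1 * kap\<^sup>2 * p\<^sup>2 / x"
      using s(2) x by (intro divide_right_mono mult_right_mono) auto
    finally show ?thesis by simp
  qed
  have k: "- 2 * (\<bar>e\<bar> * kap * p / x) * p + 7 * kap\<^sup>2 * p\<^sup>2 / x = - (e\<^sup>2 / 7) * p\<^sup>2 / x"
    by (simp add: kap power2_eq_square field_simps)
  have eq2: "e * p\<^sup>2 - e * qv\<^sup>2 + a * (2 * x - 1) * (qv - p)\<^sup>2 + 2 * b * x * (p' - qv)\<^sup>2
     = - 2 * (\<bar>e\<bar> * kap * p / x) * p - e * t\<^sup>2 + a * (2 * x - 1) * t\<^sup>2 + 2 * b * x * (D - t)\<^sup>2"
    using eq et by simp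
  have i4': "1/2 * t\<^sup>2 + 2 * x * t\<^sup>2 + 4 * x * t\<^sup>2 \<le> 7 * kap\<^sup>2 * p\<^sup>2 / x"
    using i4 by (simp add: algebra_simps)
  have "e * p\<^sup>2 - e * qv\<^sup>2 + a * (2 * x - 1) * (qv - p)\<^sup>2 + 2 * b * x * (p' - qv)\<^sup>2
     \<le> - 2 * (\<bar>e\<bar> * kap * p / x) * p + 7 * kap\<^sup>2 * p\<^sup>2 / x + 4 * x * D\<^sup>2"
    using eq2 i1 i2 i3 i4' by linarith
  then show ?thesis using k by (simp add: D_def)
qed



primrec sgs :: "real \<Rightarrow> real \<Rightarrow> nat \<Rightarrow> real" where
  "sgs c1 c2 0 = 1"
| "sgs c1 c2 (Suc k) = - sgn (per_coeff c1 c2 k) * sgs c1 c2 k"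

lemma sgs_abs: assumes "c1 * c2 \<noteq> 0" shows "\<bar>sgs c1 c2 k\<bar> = 1"
proof (induction k)
  case 0 then show ?case by simp
next
  case (Suc k)
  have "per_coeff c1 c2 k \<noteq> 0" using assms by (auto simp: per_coeff_def)
  then have "\<bar>sgn (per_coeff c1 c2 k)\<bar> = 1" by (simp add: abs_sgn)
  then show ?case using Suc by (simp add: abs_mult)
qed

lemma sgs_sq: assumes "c1 * c2 \<noteq> 0" shows "(sgs c1 c2 k)\<^sup>2 = 1"
  using sgs_abs[OF assms, of k] by (metis abs_power2 one_power2 power2_abs)

lemma mult_sgn_self: "x * sgn x = \<bar>x::real\<bar>"
  by (cases "x > 0"; cases "x = 0") auto

lemma clamp_lip: "\<bar>max 0 (min 1 y) - max 0 (min 1 z)\<bar> \<le> \<bar>y - (z::real)\<bar>"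
  by (auto simp: max_def min_def abs_if)

lemma pair_sum: "(\<Sum>k<2 * (m::nat). g k) = (\<Sum>i<m. g (2 * i) + g (2 * i + 1))"
  by (induction m) (simp_all add: algebra_simps)

lemma T_id:
  fixes a b e p q p' y :: real
  assumes "a + b = 1" "e = (b - a) / 2"
  shows "(2 * y + 1/2) * p\<^sup>2 - 2 * a * (2 * y + 1) * p * q
       + ((2 * y + 1) + 1/2) * q\<^sup>2 - 2 * b * (2 * y + 2) * q * p'
     = (e * p\<^sup>2 - e * q\<^sup>2 + a * (2 * (y + 1) - 1) * (q - p)\<^sup>2 + 2 * b * (y + 1) * (p' - q)\<^sup>2)
       + (2 * b * y * p\<^sup>2 - 2 * b * (y + 1) * p'\<^sup>2)"
proof -
  have a: "a = 1 - b" using assms by simp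
  show ?thesis unfolding assms(2) a by (simp add: power2_eq_square field_simps)
qed

lemma test_vector:
  assumes c: "\<bar>c1\<bar> + \<bar>c2\<bar> = 1" and c12: "c1 * c2 \<noteq> 0" and cne: "\<bar>c1\<bar> \<noteq> \<bar>c2\<bar>"
  shows "\<exists>r0\<in>Dr c1 c2. (\<Sum>k. jr c1 c2 r0 k * r0 k) < (1/2) * (\<Sum>k. (r0 k)\<^sup>2)"
proof -
  define a where "a = \<bar>c1\<bar>"
  define b where "b = \<bar>c2\<bar>"
  define e where "e = (b - a) / 2"
  have ab: "a + b = 1" "0 \<le> a" "0 \<le> b" using c by (auto simp: a_def b_def)
  have e0: "e \<noteq> 0" using cne by (simp add: e_def a_def b_def)
  define s where "s = sgn e"
  have se: "s * e = \<bar>e\<bar>" unfolding s_def by (metis mult.commute mult_sgn_self)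
  have s2: "s\<^sup>2 \<le> 1" unfolding s_def using e0 by (simp add: power2_eq_square sgn_if)
  define kap where "kap = \<bar>e\<bar> / 7"
  obtain N where HN: "56 / e\<^sup>2 < (\<Sum>i<N. 1 / real (Suc i))"
  proof (rule ccontr)
    assume "\<not> thesis"
    with that have "\<And>N. (\<Sum>i<N. 1 / real (Suc i)) \<le> 56 / e\<^sup>2" by (meson not_le)
    then have "summable (\<lambda>i. 1 / real (Suc i))" by (intro summableI_nonneg_bounded) auto
    then show False using not_summable_harm1 by simp
  qed
  have Npos: "N > 0" using HN e0 by (cases N) (auto simp: divide_pos_pos)
  define p where "p i = max 0 (min 1 ((2 * real N - real i) / real N))" for i
  define q where "q i = p i + s * kap * p i / real (Suc i)" for i
  define f where "f k = (if even k then p (k div 2) else q (k div 2))" for k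
  define r0 where "r0 k = sgs c1 c2 k * f k" for k
  define m where "m = 2 * N + 1"
  define M where "M = 2 * m"
  have p_one: "p i = 1" if "i \<le> N" for i
  proof -
    have "1 \<le> (2 * real N - real i) / real N" using that Npos by (simp add: field_simps)
    then show ?thesis by (simp add: p_def)
  qed
  have p_zero: "p i = 0" if "2 * N \<le> i" for i
  proof -
    have "(2 * real N - real i) / real N \<le> 0" using that Npos
      by (intro divide_nonpos_pos) auto
    then show ?thesis by (simp add: p_def)
  qed
  have f_zero: "f k = 0" if "4 * N \<le> k" for k
    using that p_zero[of "k div 2"] by (auto simp: f_def q_def)
  have r0_zero: "r0 k = 0" if "4 * N \<le> k" for k
    using f_zero[OF that] by (simp add: r0_def)
  have jr_zero: "jr c1 c2 r0 k = 0" if "4 * N + 1 \<le> k" for k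
    using that r0_zero[of "k - 1"] r0_zero[of k] r0_zero[of "k + 1"] by (simp add: jr_def)
  have r0D: "r0 \<in> Dr c1 c2"
  proof -
    have z1: "(r0 n)\<^sup>2 = 0" if "n \<notin> {..<4 * N + 1}" for n using that r0_zero[of n] by simp
    have z2: "(jr c1 c2 r0 n)\<^sup>2 = 0" if "n \<notin> {..<4 * N + 1}" for n using that jr_zero[of n] by simp
    show ?thesis unfolding Dr_def L2r_def
      using summable_finite[OF finite_lessThan z1] summable_finite[OF finite_lessThan z2] by auto
  qed
  have form: "(\<Sum>k. jr c1 c2 r0 k * r0 k) = (\<Sum>k<Suc M. jr c1 c2 r0 k * r0 k)"
    by (rule suminf_finite) (auto simp: M_def m_def jr_zero)
  have nrm: "(\<Sum>k. (r0 k)\<^sup>2) = (\<Sum>k<Suc M. (r0 k)\<^sup>2)"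
    by (rule suminf_finite) (auto simp: M_def m_def r0_zero)
  have fM: "f M = 0" by (rule f_zero) (simp add: M_def m_def)
  have PQ: "(\<Sum>k<Suc M. jr c1 c2 r0 k * r0 k) = Qf c1 c2 r0 M"
    using P_Q[of c1 c2 r0 M] fM by (simp add: r0_def)
  have r0sq: "(r0 k)\<^sup>2 = (f k)\<^sup>2" for k
    using sgs_sq[OF c12, of k] by (simp add: r0_def power_mult_distrib)
  have lr: "lamc c1 c2 k * r0 k * r0 (Suc k) = - \<bar>per_coeff c1 c2 k\<bar> * real (k + 1) * f k * f (Suc k)" for k
  proof -
    have "lamc c1 c2 k * r0 k * r0 (Suc k)
      = - (per_coeff c1 c2 k * sgn (per_coeff c1 c2 k)) * (sgs c1 c2 k)\<^sup>2 * real (k + 1) * f k * f (Suc k)"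
      by (simp add: lamc_def r0_def power2_eq_square algebra_simps)
    then show ?thesis by (simp add: mult_sgn_self sgs_sq[OF c12])
  qed
  define g where "g k = (real k + 1/2) * (f k)\<^sup>2 - 2 * \<bar>per_coeff c1 c2 k\<bar> * real (k + 1) * f k * f (Suc k)" for k
  have diff: "Qf c1 c2 r0 M - (1/2) * (\<Sum>k<Suc M. (r0 k)\<^sup>2) = (\<Sum>k<M. g k)"
  proof -
    have "Qf c1 c2 r0 M - (1/2) * (\<Sum>k<Suc M. (r0 k)\<^sup>2)
        = (\<Sum>k<Suc M. (real k + 1/2) * (f k)\<^sup>2) - 2 * (\<Sum>k<M. \<bar>per_coeff c1 c2 k\<bar> * real (k + 1) * f k * f (Suc k))"
    proof -
      have S2: "(\<Sum>k<M. lamc c1 c2 k * r0 k * r0 (k + 1)) = (\<Sum>k<M. - (\<bar>per_coeff c1 c2 k\<bar> * real (k + 1) * f k * f (Suc k)))"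
        by (intro sum.cong refl) (metis lr Suc_eq_plus1 mult_minus_left)
      have S1: "(\<Sum>k<Suc M. real (k + 1) * (r0 k)\<^sup>2) - (1/2) * (\<Sum>k<Suc M. (r0 k)\<^sup>2)
          = (\<Sum>k<Suc M. (real k + 1/2) * (f k)\<^sup>2)"
        by (simp add: r0sq sum_distrib_left sum_subtractf[symmetric] algebra_simps)
      show ?thesis unfolding Qf_def lessThan_Suc_atMost[symmetric] S2 using S1
        by (simp add: sum_negf)
    qed
    also have "\<dots> = (\<Sum>k<M. g k)"
      using fM by (simp add: g_def sum_subtractf sum_distrib_left algebra_simps)
    finally show ?thesis .
  qed
  define hh where "hh i = 2 * b * real i * (p i)\<^sup>2" for i
  define E where "E i = e * (p i)\<^sup>2 - e * (q i)\<^sup>2 + a * (2 * (real i + 1) - 1) * (q i - p i)\<^sup>2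
      + 2 * b * (real i + 1) * (p (Suc i) - q i)\<^sup>2" for i
  have gpair: "g (2 * i) + g (2 * i + 1) = E i + (hh i - hh (Suc i))" for i
  proof -
    have f1: "f (2 * i) = p i" "f (Suc (2 * i)) = q i" "f (Suc (2 * i + 1)) = p (Suc i)"
      by (simp_all add: f_def)
    have pc: "\<bar>per_coeff c1 c2 (2 * i)\<bar> = a" "\<bar>per_coeff c1 c2 (2 * i + 1)\<bar> = b"
      by (simp_all add: per_coeff_def a_def b_def)
    have "g (2 * i) + g (2 * i + 1) = (2 * real i + 1/2) * (p i)\<^sup>2 - 2 * a * (2 * real i + 1) * p i * q i
       + ((2 * real i + 1) + 1/2) * (q i)\<^sup>2 - 2 * b * (2 * real i + 2) * q i * p (Suc i)"
      unfolding g_def using f1 pc by (simp add: algebra_simps)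
    also have "\<dots> = E i + (hh i - hh (Suc i))"
      unfolding E_def hh_def using T_id[OF ab(1) e_def, of "real i" "p i" "q i" "p (Suc i)"]
      by (simp add: algebra_simps)
    finally show ?thesis .
  qed
  have Eb0: "E i \<le> - (e\<^sup>2 / 7) * (p i)\<^sup>2 / (real i + 1) + 4 * (real i + 1) * (p (Suc i) - p i)\<^sup>2" for i
    unfolding E_def
    by (rule E_bound[OF ab e_def se s2 kap_def, of "real i + 1" "s * kap * p i / (real i + 1)"])
       (auto simp: q_def add.commute)
  have Eb: "E i \<le> (- (e\<^sup>2 / 7)) * ((p i)\<^sup>2 / (real i + 1)) + 4 * (real i + 1) * (p (Suc i) - p i)\<^sup>2" for i
    using Eb0[of i] by simp
  have m_eq: "M = 2 * m" by (simp add: M_def)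
  have sumT: "(\<Sum>k<M. g k) = (\<Sum>i<m. E i)"
  proof -
    have "(\<Sum>k<M. g k) = (\<Sum>i<m. E i + (hh i - hh (Suc i)))"
      unfolding m_eq pair_sum gpair ..
    also have "\<dots> = (\<Sum>i<m. E i) + (hh 0 - hh m)"
      by (simp add: sum.distrib sum_lessThan_telescope')
    also have "hh m = 0" using p_zero[of m] by (simp add: hh_def m_def)
    finally show ?thesis by (simp add: hh_def)
  qed
  have b1: "(\<Sum>i<N. 1 / real (Suc i)) \<le> (\<Sum>i<m. (p i)\<^sup>2 / (real i + 1))"
  proof -
    have "(\<Sum>i<N. 1 / real (Suc i)) = (\<Sum>i<N. (p i)\<^sup>2 / (real i + 1))"
      by (intro sum.cong refl) (simp add: p_one add.commute)
    also have "\<dots> \<le> (\<Sum>i<m. (p i)\<^sup>2 / (real i + 1))"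
      by (intro sum_mono2) (auto simp: m_def)
    finally show ?thesis .
  qed
  have dterm: "4 * (real i + 1) * (p (Suc i) - p i)\<^sup>2 \<le> (if N \<le> i \<and> i < 2 * N then 8 / real N else 0)" for i
  proof (cases "i < N")
    case True
    then show ?thesis using p_one[of i] p_one[of "Suc i"] by simp
  next
    case F: False
    show ?thesis
    proof (cases "2 * N \<le> i")
      case True
      then show ?thesis using p_zero[of i] p_zero[of "Suc i"] by simp
    next
      case False
      have "\<bar>p (Suc i) - p i\<bar> \<le> \<bar>(2 * real N - real (Suc i)) / real N - (2 * real N - real i) / real N\<bar>"
        unfolding p_def by (rule clamp_lip)
      also have "\<dots> = 1 / real N" using Npos by (simp add: field_simps)
      finally have d: "\<bar>p (Suc i) - p i\<bar> \<le> 1 / real N" .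
      have "(p (Suc i) - p i)\<^sup>2 \<le> (1 / real N)\<^sup>2"
        using d by (metis abs_ge_zero power2_abs power_mono)
      moreover have "real i + 1 \<le> 2 * real N" using False by linarith
      ultimately have "4 * (real i + 1) * (p (Suc i) - p i)\<^sup>2 \<le> 4 * (2 * real N) * (1 / real N)\<^sup>2"
        by (intro mult_mono) auto
      also have "\<dots> = 8 / real N" using Npos by (simp add: power2_eq_square field_simps)
      finally show ?thesis using F False by simp
    qed
  qed
  have b2: "(\<Sum>i<m. 4 * (real i + 1) * (p (Suc i) - p i)\<^sup>2) \<le> 8"
  proof -
    have "(\<Sum>i<m. 4 * (real i + 1) * (p (Suc i) - p i)\<^sup>2)
        \<le> (\<Sum>i<m. (if N \<le> i \<and> i < 2 * N then 8 / real N else 0))"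
      by (intro sum_mono dterm)
    also have "\<dots> = (\<Sum>i\<in>{N..<2 * N}. 8 / real N)"
      unfolding sum.inter_filter[symmetric, OF finite_lessThan]
      by (intro sum.cong) (auto simp: m_def)
    also have "\<dots> = 8" using Npos by simp
    finally show ?thesis .
  qed
  have "(\<Sum>i<m. E i) \<le> (\<Sum>i<m. (- (e\<^sup>2 / 7)) * ((p i)\<^sup>2 / (real i + 1)) + 4 * (real i + 1) * (p (Suc i) - p i)\<^sup>2)"
    by (intro sum_mono Eb)
  also have "\<dots> = - (e\<^sup>2 / 7) * (\<Sum>i<m. (p i)\<^sup>2 / (real i + 1)) + (\<Sum>i<m. 4 * (real i + 1) * (p (Suc i) - p i)\<^sup>2)"
    by (simp only: sum.distrib sum_distrib_left)
  also have "\<dots> \<le> - (e\<^sup>2 / 7) * (\<Sum>i<N. 1 / real (Suc i)) + 8"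
    using b1 b2 e0 by (intro add_mono) (auto intro: mult_left_mono_neg)
  also have "\<dots> < 0"
  proof -
    have "56 < e\<^sup>2 * (\<Sum>i<N. 1 / real (Suc i))" using HN e0 by (simp add: field_simps)
    then show ?thesis by simp
  qed
  finally have neg: "(\<Sum>i<m. E i) < 0" .
  have "(\<Sum>k. jr c1 c2 r0 k * r0 k) - (1/2) * (\<Sum>k. (r0 k)\<^sup>2) < 0"
    unfolding form nrm PQ diff sumT using neg .
  then show ?thesis using r0D by auto
qed


theorem theorem3:
  fixes c1 c2 :: real
  assumes "\<bar>c1\<bar> + \<bar>c2\<bar> = 1"
    and "c1 * c2 \<noteq> 0"
    and "\<bar>c1\<bar> \<noteq> \<bar>c2\<bar>"
  shows "\<exists>x::real. x < 1/2 \<and>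
           complex_of_real x \<in> jacobi_spectrum (\<lambda>k. real (k + 1))
                                (\<lambda>k. per_coeff c1 c2 k * real (k + 1))"
  using main_from_test[OF assms(1) test_vector[OF assms]] by simp

end
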